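(* $\chi_i'(S_{C_5}^1)=3$ and $\chi_i'(S_{C_5}^n)=4$ for every integer $n\ge 2$, where $C_5$ is the cycle on $5$ vertices.
   Context: For a graph $H$ with at least one edge, an injective edge $k$-coloring is a map $c:E(H)\to\{1,\dots,k\}$ such that whenever $e_1=xy$, $e_2=yz$, $e_3=zu$ are edges of $H$ with $x,y,z$ distinct and $u\notin\{y,z\}$ (the case $u=x$ being allowed), we have $c(e_1)\ne c(e_3)$. The injective chromatic index $\chi_i'(H)$ is the least $k$ for which such a coloring exists. For a graph $G$ and positive integer $n$, the generalized Sierpiński graph $S_G^n$ has vertex set $V(G)^n$, and $(u_1,\dots,u_n)$, $(v_1,\dots,v_n)$ are adjacent if and only if there is $d\in\{1,\dots,n\}$ with $u_i=v_i$ for $i<d$, $u_dv_d\in E(G)$, and $u_i=v_d$, $v_i=u_d$ for all $i>d$. *)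

theory Defs
  imports Main
begin

text \<open>A graph is given by a symmetric, irreflexive adjacency predicate; its edge set
  consists of the unordered pairs {x,y} with x adjacent to y.\<close>

definition edges :: "('a \<Rightarrow> 'a \<Rightarrow> bool) \<Rightarrow> 'a set set" where
  "edges adj = {{x, y} | x y. adj x y}"

text \<open>Injective edge k-colouring: c maps E(H) into {1..k}, and for every path-or-triangle
  x y z u (edges xy, yz, zu, x,y,z distinct, u not in {y,z}, u = x allowed) the edges
  xy and zu receive different colours.\<close>

definition injective_edge_coloring ::
  "('a \<Rightarrow> 'a \<Rightarrow> bool) \<Rightarrow> nat \<Rightarrow> ('a set \<Rightarrow> nat) \<Rightarrow> bool" where
  "injective_edge_coloring adj k c \<longleftrightarrow>
     (\<forall>e\<in>edges adj. c e \<in> {1..k}) \<and>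
     (\<forall>x y z u. adj x y \<and> adj y z \<and> adj z u \<and> x \<noteq> y \<and> y \<noteq> z \<and> x \<noteq> z
        \<and> u \<noteq> y \<and> u \<noteq> z \<longrightarrow> c {x, y} \<noteq> c {z, u})"

definition injective_chromatic_index :: "('a \<Rightarrow> 'a \<Rightarrow> bool) \<Rightarrow> nat" where
  "injective_chromatic_index adj = (LEAST k. \<exists>c. injective_edge_coloring adj k c)"

text \<open>Generalized Sierpinski graph S_G^n on vertex set V(G)^n (words of length n over V).
  Positions are 0-based here: d ranges over {0..<n}.\<close>

definition sierpinski_adj ::
  "'a set \<Rightarrow> ('a \<Rightarrow> 'a \<Rightarrow> bool) \<Rightarrow> nat \<Rightarrow> 'a list \<Rightarrow> 'a list \<Rightarrow> bool" where
  "sierpinski_adj V adj n u v \<longleftrightarrow>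
     length u = n \<and> length v = n \<and> set u \<subseteq> V \<and> set v \<subseteq> V \<and>
     (\<exists>d<n. (\<forall>i<d. u ! i = v ! i) \<and> adj (u ! d) (v ! d) \<and>
            (\<forall>i. d < i \<and> i < n \<longrightarrow> u ! i = v ! d \<and> v ! i = u ! d))"

definition C5_vertices :: "nat set" where
  "C5_vertices = {0..<5}"

definition C5_adj :: "nat \<Rightarrow> nat \<Rightarrow> bool" where
  "C5_adj a b \<longleftrightarrow> a < 5 \<and> b < 5 \<and> (b = (a + 1) mod 5 \<or> a = (b + 1) mod 5)"

end

theory Submission
  imports Defs
begin

abbreviation SS :: "nat \<Rightarrow> nat list \<Rightarrow> nat list \<Rightarrow> bool" where
  "SS n \<equiv> sierpinski_adj C5_vertices C5_adj n"

lemma C5_irr: "\<not> C5_adj a a"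
  unfolding C5_adj_def by presburger

lemma C5_sym: "C5_adj a b \<Longrightarrow> C5_adj b a"
  unfolding C5_adj_def by auto

lemma SS_sym: "SS n u v \<Longrightarrow> SS n v u"
  unfolding sierpinski_adj_def using C5_sym by metis

lemma ex_less2: "(\<exists>d<(2::nat). P d) \<longleftrightarrow> P 0 \<or> P 1"
  by (auto simp: numeral_2_eq_2 less_Suc_eq)

lemma S2_iff: "SS 2 [a,b] [c,d] \<longleftrightarrow> a<5 \<and> b<5 \<and> c<5 \<and> d<5 \<and>
   ((C5_adj a c \<and> b = c \<and> d = a) \<or> (a = c \<and> C5_adj b d))"
  unfolding sierpinski_adj_def C5_vertices_def ex_less2
  apply (auto simp: less_Suc_eq numeral_2_eq_2 dest: C5_sym)
  done

lemma S1_iff: "SS 1 [a] [c] \<longleftrightarrow> a<5 \<and> c<5 \<and> C5_adj a c"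
  unfolding sierpinski_adj_def C5_vertices_def
  by auto

definition T1 :: "nat\<times>nat \<Rightarrow> nat\<times>nat \<Rightarrow> bool" where
  "T1 P Q \<longleftrightarrow> fst P = fst Q \<and> C5_adj (snd P) (snd Q)"
definition T2 :: "nat\<times>nat \<Rightarrow> nat\<times>nat \<Rightarrow> bool" where
  "T2 P Q \<longleftrightarrow> snd P = fst Q \<and> snd Q = fst P \<and> C5_adj (fst P) (fst Q)"
definition T3 :: "nat\<times>nat \<Rightarrow> nat\<times>nat \<Rightarrow> bool" where
  "T3 P Q \<longleftrightarrow> fst P = snd P \<and> fst Q = snd Q \<and> C5_adj (fst P) (fst Q)"
definition R2 :: "nat\<times>nat \<Rightarrow> nat\<times>nat \<Rightarrow> bool" where
  "R2 P Q \<longleftrightarrow> T1 P Q \<or> T2 P Q \<or> T3 P Q"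
definition allV :: "(nat\<times>nat) list" where
  "allV = [(a,b). a \<leftarrow> [0..<5], b \<leftarrow> [0..<5]]"
definition nbl :: "nat\<times>nat \<Rightarrow> (nat\<times>nat) list" where
  "nbl P = filter (R2 P) allV"
definition ctab :: "((nat\<times>nat)\<times>nat) list" where
  "ctab = [((0,1),4), ((0,4),4), ((0,6),2), ((0,24),4), ((1,2),1), ((1,5),3), ((2,3),1), ((3,4),3), ((4,20),3), ((5,6),2), ((5,9),3), ((6,7),2), ((6,12),2), ((7,8),1), ((7,11),3), ((8,9),4), ((10,11),3), ((10,14),2), ((11,12),4), ((12,13),1), ((12,18),2), ((13,14),1), ((13,17),3), ((15,16),1), ((15,19),4), ((16,17),3), ((17,18),2), ((18,19),2), ((18,24),1), ((19,23),3), ((20,21),2), ((20,24),1), ((21,22),2), ((22,23),3), ((23,24),1)]"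
definition col :: "nat\<times>nat \<Rightarrow> nat\<times>nat \<Rightarrow> nat" where
  "col P Q = (let i = 5 * fst P + snd P; j = 5 * fst Q + snd Q in
     (case map_of ctab (min i j, max i j) of Some k \<Rightarrow> k | None \<Rightarrow> 1))"

lemma T_disj: "\<not> (T1 P Q \<and> T2 P Q)" "\<not> (T1 P Q \<and> T3 P Q)" "\<not> (T2 P Q \<and> T3 P Q)"
  unfolding T1_def T2_def T3_def using C5_irr by (metis prod.collapse)+

lemma T3_sym: "T3 P Q \<Longrightarrow> T3 Q P"
  unfolding T3_def using C5_sym by blast

lemma col_sym: "col P Q = col Q P"
  unfolding col_def Let_def by (simp add: min.commute max.commute)

lemma col_range: "col P Q \<in> {1..4}"
proof -
  have "\<forall>p\<in>set ctab. snd p \<in> {1..4}" by (simp add: ctab_def)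
  then show ?thesis unfolding col_def Let_def
    by (auto split: option.split dest!: map_of_SomeD)
qed

lemma allV_iff: "P \<in> set allV \<longleftrightarrow> fst P < 5 \<and> snd P < 5"
  unfolding allV_def by (cases P) (auto simp: image_iff)

lemma nbl_iff: "Q \<in> set (nbl P) \<longleftrightarrow> R2 P Q \<and> Q \<in> set allV"
  unfolding nbl_def by auto

lemma fincheck: "\<forall>P\<in>set allV. \<forall>Q\<in>set (nbl P). \<forall>R\<in>set (nbl Q). \<forall>T\<in>set (nbl R).
   P \<noteq> R \<and> Q \<noteq> T \<and> \<not>(T3 P Q \<and> T3 Q R) \<and> \<not>(T3 Q R \<and> T3 R T) \<longrightarrow> col P Q \<noteq> col R T"
  by code_simp

definition prj :: "nat \<Rightarrow> nat list \<Rightarrow> nat\<times>nat" where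
  "prj n v = (v!(n-2), v!(n-1))"

lemma edge_typ:
  assumes n: "2 \<le> n" and d: "d < n" and
    h1: "\<forall>i<d. y!i = x!i" and h2: "C5_adj (y!d) (x!d)" and
    h3: "\<forall>i. d<i \<and> i<n \<longrightarrow> y!i = x!d \<and> x!i = y!d"
  shows "(d = n-1 \<longrightarrow> T1 (prj n y) (prj n x)) \<and> (d = n-2 \<longrightarrow> T2 (prj n y) (prj n x))
     \<and> (d < n-2 \<longrightarrow> T3 (prj n y) (prj n x))"
proof (intro conjI impI)
  assume "d = n-1"
  then show "T1 (prj n y) (prj n x)" using n h1 h2 unfolding T1_def prj_def by simp
next
  assume e: "d = n-2"
  have "y!(n-1) = x!d \<and> x!(n-1) = y!d" using h3 e n by simp
  then show "T2 (prj n y) (prj n x)" using e h2 unfolding T2_def prj_def by simp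
next
  assume e: "d < n-2"
  have a: "y!(n-1) = x!d \<and> x!(n-1) = y!d" using h3 e n by simp
  have b: "y!(n-2) = x!d \<and> x!(n-2) = y!d" using h3 e n by simp
  show "T3 (prj n y) (prj n x)" using a b C5_sym[OF h2] unfolding T3_def prj_def by simp
qed

lemma SS_R2:
  assumes n: "2 \<le> n" and s: "SS n y x"
  shows "R2 (prj n y) (prj n x)"
proof -
  from s obtain d where d: "d < n" and h1: "\<forall>i<d. y!i = x!i" and h2: "C5_adj (y!d) (x!d)" and
    h3: "\<forall>i. d<i \<and> i<n \<longrightarrow> y!i = x!d \<and> x!i = y!d"
    unfolding sierpinski_adj_def by blast
  have "d = n-1 \<or> d = n-2 \<or> d < n-2" using d n by linarith
  then show ?thesis using edge_typ[OF n d h1 h2 h3] unfolding R2_def by blast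
qed

lemma SS_allV:
  assumes n: "2 \<le> n" and s: "SS n y x"
  shows "prj n y \<in> set allV"
proof -
  have l: "length y = n" and st: "set y \<subseteq> {0..<5}"
    using s unfolding sierpinski_adj_def C5_vertices_def by auto
  have "y!(n-2) \<in> set y" "y!(n-1) \<in> set y" using l n by auto
  then show ?thesis using st unfolding allV_iff prj_def by auto
qed

lemma two_lower:
  assumes d1: "d1 < n-1" and d2: "d2 < n-1"
    and a1: "C5_adj (y!d1) (x!d1)" and b1: "\<forall>i. d1<i \<and> i<n \<longrightarrow> y!i = x!d1 \<and> x!i = y!d1"
    and a2: "C5_adj (y!d2) (z!d2)" and b2: "\<forall>i. d2<i \<and> i<n \<longrightarrow> y!i = z!d2 \<and> z!i = y!d2"
  shows "d1 = d2"
proof (rule ccontr)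
  assume ne: "d1 \<noteq> d2"
  show False
  proof (cases "d1 < d2")
    case True
    have "y!d2 = x!d1" using b1 True d2 by auto
    moreover have "y!(n-1) = x!d1" using b1 d1 by auto
    moreover have "y!(n-1) = z!d2" using b2 d2 by auto
    ultimately show False using a2 C5_irr by metis
  next
    case False
    then have lt: "d2 < d1" using ne by simp
    have "y!d1 = z!d2" using b2 lt d1 by auto
    moreover have "y!(n-1) = z!d2" using b2 d2 by auto
    moreover have "y!(n-1) = x!d1" using b1 d1 by auto
    ultimately show False using a1 C5_irr by metis
  qed
qed

lemma nb2:
  assumes n: "2 \<le> n" and yx: "SS n y x" and yz: "SS n y z" and ne: "x \<noteq> z"
  shows "prj n x \<noteq> prj n z \<and> \<not> (T3 (prj n y) (prj n x) \<and> T3 (prj n y) (prj n z))"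
proof -
  from yx obtain d1 where d1: "d1 < n" and h1: "\<forall>i<d1. y!i = x!i" and h2: "C5_adj (y!d1) (x!d1)" and
    h3: "\<forall>i. d1<i \<and> i<n \<longrightarrow> y!i = x!d1 \<and> x!i = y!d1" and lx: "length x = n"
    unfolding sierpinski_adj_def by blast
  from yz obtain d2 where d2: "d2 < n" and k1: "\<forall>i<d2. y!i = z!i" and k2: "C5_adj (y!d2) (z!d2)" and
    k3: "\<forall>i. d2<i \<and> i<n \<longrightarrow> y!i = z!d2 \<and> z!i = y!d2" and lz: "length z = n"
    unfolding sierpinski_adj_def by blast
  note t1 = edge_typ[OF n d1 h1 h2 h3] and t2 = edge_typ[OF n d2 k1 k2 k3]
  have c1: "d1 = n-1 \<or> d1 = n-2 \<or> d1 < n-2" using d1 n by linarith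
  have c2: "d2 = n-1 \<or> d2 = n-2 \<or> d2 < n-2" using d2 n by linarith
  have same: "d1 = d2" if hyp: "prj n x = prj n z \<or> (T3 (prj n y) (prj n x) \<and> T3 (prj n y) (prj n z))"
  proof -
    have "(d1 = n-1) = (d2 = n-1)"
      using hyp t1 t2 c1 c2 T_disj by metis
    moreover have "d1 < n-1 \<Longrightarrow> d2 < n-1 \<Longrightarrow> d1 = d2"
      using two_lower[of d1 n d2 y x z] h2 h3 k2 k3 by blast
    ultimately show ?thesis using d1 d2 by linarith
  qed
  have eqz: "x = z" if dd: "d1 = d2" and lt: "d1 < n-1"
  proof (rule nth_equalityI)
    show "length x = length z" using lx lz by simp
    fix i assume "i < length x"
    then have i: "i < n" using lx by simp
    show "x!i = z!i"
    proof -
      have "i < d1 \<or> i = d1 \<or> d1 < i" by linarith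
      moreover have "i < d1 \<Longrightarrow> ?thesis" using h1 k1 dd by metis
      moreover have "i = d1 \<Longrightarrow> ?thesis"
      proof -
        assume "i = d1"
        have "y!(n-1) = x!d1" "y!(n-1) = z!d2" using h3 k3 lt dd by auto
        then show ?thesis using \<open>i = d1\<close> dd by simp
      qed
      moreover have "d1 < i \<Longrightarrow> ?thesis" using h3 k3 dd i by metis
      ultimately show ?thesis by blast
    qed
  qed
  have eqz2: "x = z" if dd: "d1 = d2" and e: "d1 = n-1" and pp: "prj n x = prj n z"
  proof (rule nth_equalityI)
    show "length x = length z" using lx lz by simp
    fix i assume "i < length x"
    then have i: "i < n" using lx by simp
    show "x!i = z!i"
    proof (cases "i < n-1")
      case True then show ?thesis using h1 k1 dd e by metis
    next
      case False then have "i = n-1" using i by simp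
      then show ?thesis using pp unfolding prj_def by simp
    qed
  qed
  show ?thesis
  proof (intro conjI notI)
    assume pp: "prj n x = prj n z"
    then have dd: "d1 = d2" using same by blast
    show False
    proof (cases "d1 = n-1")
      case True then show False using eqz2[OF dd True pp] ne by simp
    next
      case False then have "d1 < n-1" using d1 by linarith
      then show False using eqz[OF dd] ne by blast
    qed
  next
    assume tt: "T3 (prj n y) (prj n x) \<and> T3 (prj n y) (prj n z)"
    then have dd: "d1 = d2" using same by blast
    have "d1 \<noteq> n-1" using tt t1 T_disj by blast
    then have "d1 < n-1" using d1 by linarith
    then show False using eqz[OF dd] ne by blast
  qed
qed

definition colS :: "nat \<Rightarrow> nat list set \<Rightarrow> nat" where
  "colS n e = (SOME k. \<exists>u v. e = {u,v} \<and> SS n u v \<and> k = col (prj n u) (prj n v))"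

lemma colS_eq:
  assumes s: "SS n u v" shows "colS n {u,v} = col (prj n u) (prj n v)"
proof -
  have "\<exists>k. \<exists>u' v'. {u,v} = {u',v'} \<and> SS n u' v' \<and> k = col (prj n u') (prj n v')"
    using s by blast
  from someI_ex[OF this] obtain u' v' where e: "{u,v} = {u',v'}"
    and k: "colS n {u,v} = col (prj n u') (prj n v')" unfolding colS_def by blast
  from e have "(u = u' \<and> v = v') \<or> (u = v' \<and> v = u')" by (simp add: doubleton_eq_iff)
  then show ?thesis using k col_sym by metis
qed

lemma upper:
  assumes n: "2 \<le> n" shows "injective_edge_coloring (SS n) 4 (colS n)"
  unfolding injective_edge_coloring_def
proof (intro conjI ballI allI impI)
  fix e assume "e \<in> edges (SS n)"
  then obtain x y where "e = {x,y}" "SS n x y" unfolding edges_def by blast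
  then show "colS n e \<in> {1..4}" using colS_eq col_range by simp
next
  fix x y z u
  assume h: "SS n x y \<and> SS n y z \<and> SS n z u \<and> x \<noteq> y \<and> y \<noteq> z \<and> x \<noteq> z \<and> u \<noteq> y \<and> u \<noteq> z"
  then have xy: "SS n x y" and yz: "SS n y z" and zu: "SS n z u" and xz: "x \<noteq> z" and uy: "u \<noteq> y"
    by auto
  have P: "prj n x \<in> set allV" using SS_allV[OF n xy] .
  have Q: "prj n y \<in> set (nbl (prj n x))"
    using SS_R2[OF n xy] SS_allV[OF n yz] nbl_iff by blast
  have R: "prj n z \<in> set (nbl (prj n y))"
    using SS_R2[OF n yz] SS_allV[OF n zu] nbl_iff by blast
  have T: "prj n u \<in> set (nbl (prj n z))"
    using SS_R2[OF n zu] SS_allV[OF n SS_sym[OF zu]] nbl_iff by blast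
  have a: "prj n x \<noteq> prj n z \<and> \<not> (T3 (prj n y) (prj n x) \<and> T3 (prj n y) (prj n z))"
    using nb2[OF n SS_sym[OF xy] yz xz] .
  have b: "prj n y \<noteq> prj n u \<and> \<not> (T3 (prj n z) (prj n y) \<and> T3 (prj n z) (prj n u))"
    using nb2[OF n SS_sym[OF yz] zu] uy by metis
  have "col (prj n x) (prj n y) \<noteq> col (prj n z) (prj n u)"
    using fincheck P Q R T a b T3_sym by metis
  then show "colS n {x, y} \<noteq> colS n {z, u}" using colS_eq xy zu by simp
qed

definition emb :: "nat \<Rightarrow> nat list \<Rightarrow> nat list" where
  "emb n w = replicate (n-2) 0 @ w"

lemma emb_nth1: "i < n-2 \<Longrightarrow> emb n w ! i = 0"
  unfolding emb_def by (simp add: nth_append)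
lemma emb_nth2: "n-2 \<le> i \<Longrightarrow> emb n w ! i = w ! (i-(n-2))"
  unfolding emb_def by (simp add: nth_append)

lemma emb_adj:
  assumes n: "2 \<le> n" and s: "SS 2 u v" shows "SS n (emb n u) (emb n v)"
proof -
  from s obtain d where d: "d < 2" and h1: "\<forall>i<d. u!i = v!i" and h2: "C5_adj (u!d) (v!d)" and
    h3: "\<forall>i. d<i \<and> i<2 \<longrightarrow> u!i = v!d \<and> v!i = u!d" and lu: "length u = 2" and lv: "length v = 2"
    and su: "set u \<subseteq> C5_vertices" and sv: "set v \<subseteq> C5_vertices"
    unfolding sierpinski_adj_def by blast
  have z: "0 \<in> C5_vertices" unfolding C5_vertices_def by simp
  show ?thesis unfolding sierpinski_adj_def
  proof (intro conjI exI[of _ "n-2+d"])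
    show "length (emb n u) = n" "length (emb n v) = n" using lu lv n by (simp_all add: emb_def)
    show "set (emb n u) \<subseteq> C5_vertices" "set (emb n v) \<subseteq> C5_vertices"
      using su sv z by (auto simp: emb_def)
    show "n-2+d < n" using d n by simp
    show "\<forall>i<n-2+d. emb n u ! i = emb n v ! i"
    proof (intro allI impI)
      fix i assume i: "i < n-2+d"
      show "emb n u ! i = emb n v ! i"
      proof (cases "i < n-2")
        case True then show ?thesis by (simp add: emb_nth1)
      next
        case False then show ?thesis using h1 i by (simp add: emb_nth2)
      qed
    qed
    show "C5_adj (emb n u ! (n-2+d)) (emb n v ! (n-2+d))" using h2 by (simp add: emb_nth2)
    show "\<forall>i. n-2+d < i \<and> i < n \<longrightarrow> emb n u ! i = emb n v ! (n-2+d) \<and> emb n v ! i = emb n u ! (n-2+d)"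
    proof (intro allI impI)
      fix i assume i: "n-2+d < i \<and> i < n"
      then have j: "d < i-(n-2) \<and> i-(n-2) < 2" using n by auto
      have a: "emb n u ! i = u ! (i-(n-2))" "emb n v ! i = v ! (i-(n-2))" using i by (simp_all add: emb_nth2)
      have b: "emb n u ! (n-2+d) = u!d" "emb n v ! (n-2+d) = v!d" by (simp_all add: emb_nth2)
      show "emb n u ! i = emb n v ! (n-2+d) \<and> emb n v ! i = emb n u ! (n-2+d)"
        unfolding a b using h3 j by blast
    qed
  qed
qed

lemma emb_inj: "emb n u = emb n v \<Longrightarrow> u = v"
  unfolding emb_def by simp

lemma comb3: fixes g0 g1 g2 g3 g4 g5 g6 g7 g8 g9 g10 g11 g12 g13 g14 g15 g16 g17 g18 g19 g20 :: nat
  assumes "1 \<le> g0" and "g0 \<le> (3::nat)" and "1 \<le> g1" and "g1 \<le> (3::nat)" and "1 \<le> g2" and "g2 \<le> (3::nat)" and "1 \<le> g3" and "g3 \<le> (3::nat)" and "1 \<le> g4" and "g4 \<le> (3::nat)" and "1 \<le> g5" and "g5 \<le> (3::nat)" and "1 \<le> g6" and "g6 \<le> (3::nat)" and "1 \<le> g7" and "g7 \<le> (3::nat)" and "1 \<le> g8" and "g8 \<le> (3::nat)" and "1 \<le> g9" and "g9 \<le> (3::nat)" and "1 \<le> g10" and "g10 \<le> (3::nat)" and "1 \<le> g11" and "g11 \<le> (3::nat)" and "1 \<le> g12" and "g12 \<le> (3::nat)" and "1 \<le> g13" and "g13 \<le> (3::nat)" and "1 \<le> g14" and "g14 \<le>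 (3::nat)" and "1 \<le> g15" and "g15 \<le> (3::nat)" and "1 \<le> g16" and "g16 \<le> (3::nat)" and "1 \<le> g17" and "g17 \<le> (3::nat)" and "1 \<le> g18" and "g18 \<le> (3::nat)" and "1 \<le> g19" and "g19 \<le> (3::nat)" and "1 \<le> g20" and "g20 \<le> (3::nat)" and "g0 \<noteq> g2" and "g0 \<noteq> g3" and "g0 \<noteq> g4" and "g1 \<noteq> g4" and "g1 \<noteq> g5" and "g1 \<noteq> g7" and "g2 \<noteq> g5" and "g2 \<noteq> g7" and "g3 \<noteq> g4" and "g3 \<noteq> g6" and "g5 \<noteq> g8" and "g5 \<noteq> g9" and "g6 \<noteq> g7" and "g6 \<noteq> g8" and "g6 \<noteq> g10" and "g7 \<noteq> g9" and "g7 \<noteq> g10" and "g8 \<noteq> g13" and "g8 \<noteq> g14" and "g9 \<noteq> g13" and "g9 \<noteq> g14" and "g10 \<noteq> g11" and "g10 \<noteq> g15" and "g11 \<noteq> g14" and "g11 \<noteq> g15" and "g11 \<noteq> g16" and "g12 \<noteq> g13" and "g12 \<noteq> g14" and "g12 \<noteq> g19" and "g12 \<noteq> g20" and "g13 \<noteq> g15" and "g15 \<noteq> g19" and "g15 \<noteq> g20" and "g16 \<noteq> g17" and "g16 \<noteq> g18" and "g17 \<noteq> g18" and "g17 \<noteq> g19" and "g18 \<noteq> g20"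
  shows False
proof -
  have r0: "g0 = 1 \<or> g0 = 2 \<or> g0 = 3" using assms(1) assms(2) by arith
  have r1: "g1 = 1 \<or> g1 = 2 \<or> g1 = 3" using assms(3) assms(4) by arith
  have r2: "g2 = 1 \<or> g2 = 2 \<or> g2 = 3" using assms(5) assms(6) by arith
  have r3: "g3 = 1 \<or> g3 = 2 \<or> g3 = 3" using assms(7) assms(8) by arith
  have r4: "g4 = 1 \<or> g4 = 2 \<or> g4 = 3" using assms(9) assms(10) by arith
  have r5: "g5 = 1 \<or> g5 = 2 \<or> g5 = 3" using assms(11) assms(12) by arith
  have r6: "g6 = 1 \<or> g6 = 2 \<or> g6 = 3" using assms(13) assms(14) by arith
  have r7: "g7 = 1 \<or> g7 = 2 \<or> g7 = 3" using assms(15) assms(16) by arith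
  have r8: "g8 = 1 \<or> g8 = 2 \<or> g8 = 3" using assms(17) assms(18) by arith
  have r9: "g9 = 1 \<or> g9 = 2 \<or> g9 = 3" using assms(19) assms(20) by arith
  have r10: "g10 = 1 \<or> g10 = 2 \<or> g10 = 3" using assms(21) assms(22) by arith
  have r11: "g11 = 1 \<or> g11 = 2 \<or> g11 = 3" using assms(23) assms(24) by arith
  have r12: "g12 = 1 \<or> g12 = 2 \<or> g12 = 3" using assms(25) assms(26) by arith
  have r13: "g13 = 1 \<or> g13 = 2 \<or> g13 = 3" using assms(27) assms(28) by arith
  have r14: "g14 = 1 \<or> g14 = 2 \<or> g14 = 3" using assms(29) assms(30) by arith
  have r15: "g15 = 1 \<or> g15 = 2 \<or> g15 = 3" using assms(31) assms(32) by arith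
  have r16: "g16 = 1 \<or> g16 = 2 \<or> g16 = 3" using assms(33) assms(34) by arith
  have r17: "g17 = 1 \<or> g17 = 2 \<or> g17 = 3" using assms(35) assms(36) by arith
  have r18: "g18 = 1 \<or> g18 = 2 \<or> g18 = 3" using assms(37) assms(38) by arith
  have r19: "g19 = 1 \<or> g19 = 2 \<or> g19 = 3" using assms(39) assms(40) by arith
  have r20: "g20 = 1 \<or> g20 = 2 \<or> g20 = 3" using assms(41) assms(42) by arith
  have c0: "\<not>(g0 = 1 \<and> g2 = 1)" "\<not>(g0 = 2 \<and> g2 = 2)" "\<not>(g0 = 3 \<and> g2 = 3)" using assms(43) by auto
  have c1: "\<not>(g0 = 1 \<and> g3 = 1)" "\<not>(g0 = 2 \<and> g3 = 2)" "\<not>(g0 = 3 \<and> g3 = 3)" using assms(44) by auto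
  have c2: "\<not>(g0 = 1 \<and> g4 = 1)" "\<not>(g0 = 2 \<and> g4 = 2)" "\<not>(g0 = 3 \<and> g4 = 3)" using assms(45) by auto
  have c3: "\<not>(g1 = 1 \<and> g4 = 1)" "\<not>(g1 = 2 \<and> g4 = 2)" "\<not>(g1 = 3 \<and> g4 = 3)" using assms(46) by auto
  have c4: "\<not>(g1 = 1 \<and> g5 = 1)" "\<not>(g1 = 2 \<and> g5 = 2)" "\<not>(g1 = 3 \<and> g5 = 3)" using assms(47) by auto
  have c5: "\<not>(g1 = 1 \<and> g7 = 1)" "\<not>(g1 = 2 \<and> g7 = 2)" "\<not>(g1 = 3 \<and> g7 = 3)" using assms(48) by auto
  have c6: "\<not>(g2 = 1 \<and> g5 = 1)" "\<not>(g2 = 2 \<and> g5 = 2)" "\<not>(g2 = 3 \<and> g5 = 3)" using assms(49) by auto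
  have c7: "\<not>(g2 = 1 \<and> g7 = 1)" "\<not>(g2 = 2 \<and> g7 = 2)" "\<not>(g2 = 3 \<and> g7 = 3)" using assms(50) by auto
  have c8: "\<not>(g3 = 1 \<and> g4 = 1)" "\<not>(g3 = 2 \<and> g4 = 2)" "\<not>(g3 = 3 \<and> g4 = 3)" using assms(51) by auto
  have c9: "\<not>(g3 = 1 \<and> g6 = 1)" "\<not>(g3 = 2 \<and> g6 = 2)" "\<not>(g3 = 3 \<and> g6 = 3)" using assms(52) by auto
  have c10: "\<not>(g5 = 1 \<and> g8 = 1)" "\<not>(g5 = 2 \<and> g8 = 2)" "\<not>(g5 = 3 \<and> g8 = 3)" using assms(53) by auto
  have c11: "\<not>(g5 = 1 \<and> g9 = 1)" "\<not>(g5 = 2 \<and> g9 = 2)" "\<not>(g5 = 3 \<and> g9 = 3)" using assms(54) by auto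
  have c12: "\<not>(g6 = 1 \<and> g7 = 1)" "\<not>(g6 = 2 \<and> g7 = 2)" "\<not>(g6 = 3 \<and> g7 = 3)" using assms(55) by auto
  have c13: "\<not>(g6 = 1 \<and> g8 = 1)" "\<not>(g6 = 2 \<and> g8 = 2)" "\<not>(g6 = 3 \<and> g8 = 3)" using assms(56) by auto
  have c14: "\<not>(g6 = 1 \<and> g10 = 1)" "\<not>(g6 = 2 \<and> g10 = 2)" "\<not>(g6 = 3 \<and> g10 = 3)" using assms(57) by auto
  have c15: "\<not>(g7 = 1 \<and> g9 = 1)" "\<not>(g7 = 2 \<and> g9 = 2)" "\<not>(g7 = 3 \<and> g9 = 3)" using assms(58) by auto
  have c16: "\<not>(g7 = 1 \<and> g10 = 1)" "\<not>(g7 = 2 \<and> g10 = 2)" "\<not>(g7 = 3 \<and> g10 = 3)" using assms(59) by auto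
  have c17: "\<not>(g8 = 1 \<and> g13 = 1)" "\<not>(g8 = 2 \<and> g13 = 2)" "\<not>(g8 = 3 \<and> g13 = 3)" using assms(60) by auto
  have c18: "\<not>(g8 = 1 \<and> g14 = 1)" "\<not>(g8 = 2 \<and> g14 = 2)" "\<not>(g8 = 3 \<and> g14 = 3)" using assms(61) by auto
  have c19: "\<not>(g9 = 1 \<and> g13 = 1)" "\<not>(g9 = 2 \<and> g13 = 2)" "\<not>(g9 = 3 \<and> g13 = 3)" using assms(62) by auto
  have c20: "\<not>(g9 = 1 \<and> g14 = 1)" "\<not>(g9 = 2 \<and> g14 = 2)" "\<not>(g9 = 3 \<and> g14 = 3)" using assms(63) by auto
  have c21: "\<not>(g10 = 1 \<and> g11 = 1)" "\<not>(g10 = 2 \<and> g11 = 2)" "\<not>(g10 = 3 \<and> g11 = 3)" using assms(64) by auto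
  have c22: "\<not>(g10 = 1 \<and> g15 = 1)" "\<not>(g10 = 2 \<and> g15 = 2)" "\<not>(g10 = 3 \<and> g15 = 3)" using assms(65) by auto
  have c23: "\<not>(g11 = 1 \<and> g14 = 1)" "\<not>(g11 = 2 \<and> g14 = 2)" "\<not>(g11 = 3 \<and> g14 = 3)" using assms(66) by auto
  have c24: "\<not>(g11 = 1 \<and> g15 = 1)" "\<not>(g11 = 2 \<and> g15 = 2)" "\<not>(g11 = 3 \<and> g15 = 3)" using assms(67) by auto
  have c25: "\<not>(g11 = 1 \<and> g16 = 1)" "\<not>(g11 = 2 \<and> g16 = 2)" "\<not>(g11 = 3 \<and> g16 = 3)" using assms(68) by auto
  have c26: "\<not>(g12 = 1 \<and> g13 = 1)" "\<not>(g12 = 2 \<and> g13 = 2)" "\<not>(g12 = 3 \<and> g13 = 3)" using assms(69) by auto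
  have c27: "\<not>(g12 = 1 \<and> g14 = 1)" "\<not>(g12 = 2 \<and> g14 = 2)" "\<not>(g12 = 3 \<and> g14 = 3)" using assms(70) by auto
  have c28: "\<not>(g12 = 1 \<and> g19 = 1)" "\<not>(g12 = 2 \<and> g19 = 2)" "\<not>(g12 = 3 \<and> g19 = 3)" using assms(71) by auto
  have c29: "\<not>(g12 = 1 \<and> g20 = 1)" "\<not>(g12 = 2 \<and> g20 = 2)" "\<not>(g12 = 3 \<and> g20 = 3)" using assms(72) by auto
  have c30: "\<not>(g13 = 1 \<and> g15 = 1)" "\<not>(g13 = 2 \<and> g15 = 2)" "\<not>(g13 = 3 \<and> g15 = 3)" using assms(73) by auto
  have c31: "\<not>(g15 = 1 \<and> g19 = 1)" "\<not>(g15 = 2 \<and> g19 = 2)" "\<not>(g15 = 3 \<and> g19 = 3)" using assms(74) by auto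
  have c32: "\<not>(g15 = 1 \<and> g20 = 1)" "\<not>(g15 = 2 \<and> g20 = 2)" "\<not>(g15 = 3 \<and> g20 = 3)" using assms(75) by auto
  have c33: "\<not>(g16 = 1 \<and> g17 = 1)" "\<not>(g16 = 2 \<and> g17 = 2)" "\<not>(g16 = 3 \<and> g17 = 3)" using assms(76) by auto
  have c34: "\<not>(g16 = 1 \<and> g18 = 1)" "\<not>(g16 = 2 \<and> g18 = 2)" "\<not>(g16 = 3 \<and> g18 = 3)" using assms(77) by auto
  have c35: "\<not>(g17 = 1 \<and> g18 = 1)" "\<not>(g17 = 2 \<and> g18 = 2)" "\<not>(g17 = 3 \<and> g18 = 3)" using assms(78) by auto
  have c36: "\<not>(g17 = 1 \<and> g19 = 1)" "\<not>(g17 = 2 \<and> g19 = 2)" "\<not>(g17 = 3 \<and> g19 = 3)" using assms(79) by auto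
  have c37: "\<not>(g18 = 1 \<and> g20 = 1)" "\<not>(g18 = 2 \<and> g20 = 2)" "\<not>(g18 = 3 \<and> g20 = 3)" using assms(80) by auto
  show False using r0 r1 r2 r3 r4 r5 r6 r7 r8 r9 r10 r11 r12 r13 r14 r15 r16 r17 r18 r19 r20 c0 c1 c2 c3 c4 c5 c6 c7 c8 c9 c10 c11 c12 c13 c14 c15 c16 c17 c18 c19 c20 c21 c22 c23 c24 c25 c26 c27 c28 c29 c30 c31 c32 c33 c34 c35 c36 c37 by sat
qed

lemma lower:
  assumes n: "2 \<le> n" and k: "k \<le> 3" and c: "injective_edge_coloring (SS n) k c"
  shows False
proof -
  define G where "G x y = c {emb n x, emb n y}" for x y
  have G_comm: "G x y = G y x" for x y unfolding G_def by (simp add: insert_commute)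
  have c1: "\<forall>e\<in>edges (SS n). c e \<in> {1..k}" and
    c2: "\<forall>x y z u. SS n x y \<and> SS n y z \<and> SS n z u \<and> x \<noteq> y \<and> y \<noteq> z \<and> x \<noteq> z
        \<and> u \<noteq> y \<and> u \<noteq> z \<longrightarrow> c {x, y} \<noteq> c {z, u}"
    using c unfolding injective_edge_coloring_def by blast+
  have conf0: "G x y \<noteq> G z u" if "SS 2 x y" "SS 2 y z" "SS 2 z u" "x \<noteq> y" "y \<noteq> z" "x \<noteq> z"
    "u \<noteq> y" "u \<noteq> z" for x y z u
  proof -
    have "SS n (emb n x) (emb n y) \<and> SS n (emb n y) (emb n z) \<and> SS n (emb n z) (emb n u) \<and>
      emb n x \<noteq> emb n y \<and> emb n y \<noteq> emb n z \<and> emb n x \<noteq> emb n z \<and> emb n u \<noteq> emb n y \<and> emb n u \<noteq> emb n z"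
      using that emb_adj[OF n] emb_inj by metis
    then show ?thesis using c2 unfolding G_def by blast
  qed
  have conf: "G x y \<noteq> G z u \<and> G y x \<noteq> G z u \<and> G x y \<noteq> G u z \<and> G y x \<noteq> G u z"
    if "SS 2 x y" "SS 2 y z" "SS 2 z u" "x \<noteq> y" "y \<noteq> z" "x \<noteq> z"
    "u \<noteq> y" "u \<noteq> z" for x y z u
    using conf0[OF that] G_comm by metis
  have rng: "G x y \<in> {1..k}" if "SS 2 x y" for x y
  proof -
    have "{emb n x, emb n y} \<in> edges (SS n)" using emb_adj[OF n that] unfolding edges_def by blast
    then show ?thesis using c1 unfolding G_def by blast
  qed
  have f0: "G [1,0] [1,1] \<noteq> G [1,2] [1,3]" using conf[of "[1,0]" "[1,1]" "[1,2]" "[1,3]"] by (simp add: S2_iff C5_adj_def)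
  have f1: "G [1,0] [1,1] \<noteq> G [1,2] [2,1]" using conf[of "[1,0]" "[1,1]" "[1,2]" "[2,1]"] by (simp add: S2_iff C5_adj_def)
  have f2: "G [1,0] [1,1] \<noteq> G [1,3] [1,4]" using conf[of "[1,1]" "[1,0]" "[1,4]" "[1,3]"] by (simp add: S2_iff C5_adj_def)
  have f3: "G [1,1] [1,2] \<noteq> G [1,3] [1,4]" using conf[of "[1,1]" "[1,2]" "[1,3]" "[1,4]"] by (simp add: S2_iff C5_adj_def)
  have f4: "G [1,1] [1,2] \<noteq> G [2,0] [2,1]" using conf[of "[1,1]" "[1,2]" "[2,1]" "[2,0]"] by (simp add: S2_iff C5_adj_def)
  have f5: "G [1,1] [1,2] \<noteq> G [2,1] [2,2]" using conf[of "[1,1]" "[1,2]" "[2,1]" "[2,2]"] by (simp add: S2_iff C5_adj_def)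
  have f6: "G [1,2] [1,3] \<noteq> G [2,0] [2,1]" using conf[of "[1,3]" "[1,2]" "[2,1]" "[2,0]"] by (simp add: S2_iff C5_adj_def)
  have f7: "G [1,2] [1,3] \<noteq> G [2,1] [2,2]" using conf[of "[1,3]" "[1,2]" "[2,1]" "[2,2]"] by (simp add: S2_iff C5_adj_def)
  have f8: "G [1,2] [2,1] \<noteq> G [1,3] [1,4]" using conf[of "[2,1]" "[1,2]" "[1,3]" "[1,4]"] by (simp add: S2_iff C5_adj_def)
  have f9: "G [1,2] [2,1] \<noteq> G [2,0] [2,4]" using conf[of "[1,2]" "[2,1]" "[2,0]" "[2,4]"] by (simp add: S2_iff C5_adj_def)
  have f10: "G [2,0] [2,1] \<noteq> G [2,2] [2,3]" using conf[of "[2,0]" "[2,1]" "[2,2]" "[2,3]"] by (simp add: S2_iff C5_adj_def)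
  have f11: "G [2,0] [2,1] \<noteq> G [2,3] [2,4]" using conf[of "[2,1]" "[2,0]" "[2,4]" "[2,3]"] by (simp add: S2_iff C5_adj_def)
  have f12: "G [2,0] [2,4] \<noteq> G [2,1] [2,2]" using conf[of "[2,4]" "[2,0]" "[2,1]" "[2,2]"] by (simp add: S2_iff C5_adj_def)
  have f13: "G [2,0] [2,4] \<noteq> G [2,2] [2,3]" using conf[of "[2,0]" "[2,4]" "[2,3]" "[2,2]"] by (simp add: S2_iff C5_adj_def)
  have f14: "G [2,0] [2,4] \<noteq> G [2,3] [3,2]" using conf[of "[2,0]" "[2,4]" "[2,3]" "[3,2]"] by (simp add: S2_iff C5_adj_def)
  have f15: "G [2,1] [2,2] \<noteq> G [2,3] [2,4]" using conf[of "[2,1]" "[2,2]" "[2,3]" "[2,4]"] by (simp add: S2_iff C5_adj_def)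
  have f16: "G [2,1] [2,2] \<noteq> G [2,3] [3,2]" using conf[of "[2,1]" "[2,2]" "[2,3]" "[3,2]"] by (simp add: S2_iff C5_adj_def)
  have f17: "G [2,2] [2,3] \<noteq> G [3,1] [3,2]" using conf[of "[2,2]" "[2,3]" "[3,2]" "[3,1]"] by (simp add: S2_iff C5_adj_def)
  have f18: "G [2,2] [2,3] \<noteq> G [3,2] [3,3]" using conf[of "[2,2]" "[2,3]" "[3,2]" "[3,3]"] by (simp add: S2_iff C5_adj_def)
  have f19: "G [2,3] [2,4] \<noteq> G [3,1] [3,2]" using conf[of "[2,4]" "[2,3]" "[3,2]" "[3,1]"] by (simp add: S2_iff C5_adj_def)
  have f20: "G [2,3] [2,4] \<noteq> G [3,2] [3,3]" using conf[of "[2,4]" "[2,3]" "[3,2]" "[3,3]"] by (simp add: S2_iff C5_adj_def)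
  have f21: "G [2,3] [3,2] \<noteq> G [3,0] [3,1]" using conf[of "[2,3]" "[3,2]" "[3,1]" "[3,0]"] by (simp add: S2_iff C5_adj_def)
  have f22: "G [2,3] [3,2] \<noteq> G [3,3] [3,4]" using conf[of "[2,3]" "[3,2]" "[3,3]" "[3,4]"] by (simp add: S2_iff C5_adj_def)
  have f23: "G [3,0] [3,1] \<noteq> G [3,2] [3,3]" using conf[of "[3,0]" "[3,1]" "[3,2]" "[3,3]"] by (simp add: S2_iff C5_adj_def)
  have f24: "G [3,0] [3,1] \<noteq> G [3,3] [3,4]" using conf[of "[3,1]" "[3,0]" "[3,4]" "[3,3]"] by (simp add: S2_iff C5_adj_def)
  have f25: "G [3,0] [3,1] \<noteq> G [3,4] [4,3]" using conf[of "[3,1]" "[3,0]" "[3,4]" "[4,3]"] by (simp add: S2_iff C5_adj_def)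
  have f26: "G [3,0] [3,4] \<noteq> G [3,1] [3,2]" using conf[of "[3,4]" "[3,0]" "[3,1]" "[3,2]"] by (simp add: S2_iff C5_adj_def)
  have f27: "G [3,0] [3,4] \<noteq> G [3,2] [3,3]" using conf[of "[3,0]" "[3,4]" "[3,3]" "[3,2]"] by (simp add: S2_iff C5_adj_def)
  have f28: "G [3,0] [3,4] \<noteq> G [4,2] [4,3]" using conf[of "[3,0]" "[3,4]" "[4,3]" "[4,2]"] by (simp add: S2_iff C5_adj_def)
  have f29: "G [3,0] [3,4] \<noteq> G [4,3] [4,4]" using conf[of "[3,0]" "[3,4]" "[4,3]" "[4,4]"] by (simp add: S2_iff C5_adj_def)
  have f30: "G [3,1] [3,2] \<noteq> G [3,3] [3,4]" using conf[of "[3,1]" "[3,2]" "[3,3]" "[3,4]"] by (simp add: S2_iff C5_adj_def)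
  have f31: "G [3,3] [3,4] \<noteq> G [4,2] [4,3]" using conf[of "[3,3]" "[3,4]" "[4,3]" "[4,2]"] by (simp add: S2_iff C5_adj_def)
  have f32: "G [3,3] [3,4] \<noteq> G [4,3] [4,4]" using conf[of "[3,3]" "[3,4]" "[4,3]" "[4,4]"] by (simp add: S2_iff C5_adj_def)
  have f33: "G [3,4] [4,3] \<noteq> G [4,0] [4,4]" using conf[of "[3,4]" "[4,3]" "[4,4]" "[4,0]"] by (simp add: S2_iff C5_adj_def)
  have f34: "G [3,4] [4,3] \<noteq> G [4,1] [4,2]" using conf[of "[3,4]" "[4,3]" "[4,2]" "[4,1]"] by (simp add: S2_iff C5_adj_def)
  have f35: "G [4,0] [4,4] \<noteq> G [4,1] [4,2]" using conf[of "[4,4]" "[4,0]" "[4,1]" "[4,2]"] by (simp add: S2_iff C5_adj_def)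
  have f36: "G [4,0] [4,4] \<noteq> G [4,2] [4,3]" using conf[of "[4,0]" "[4,4]" "[4,3]" "[4,2]"] by (simp add: S2_iff C5_adj_def)
  have f37: "G [4,1] [4,2] \<noteq> G [4,3] [4,4]" using conf[of "[4,1]" "[4,2]" "[4,3]" "[4,4]"] by (simp add: S2_iff C5_adj_def)
  have h0: "G [1,0] [1,1] \<in> {1..k}" using rng[of "[1,0]" "[1,1]"] by (simp add: S2_iff C5_adj_def)
  have h1: "G [1,1] [1,2] \<in> {1..k}" using rng[of "[1,1]" "[1,2]"] by (simp add: S2_iff C5_adj_def)
  have h2: "G [1,2] [1,3] \<in> {1..k}" using rng[of "[1,2]" "[1,3]"] by (simp add: S2_iff C5_adj_def)
  have h3: "G [1,2] [2,1] \<in> {1..k}" using rng[of "[1,2]" "[2,1]"] by (simp add: S2_iff C5_adj_def)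
  have h4: "G [1,3] [1,4] \<in> {1..k}" using rng[of "[1,3]" "[1,4]"] by (simp add: S2_iff C5_adj_def)
  have h5: "G [2,0] [2,1] \<in> {1..k}" using rng[of "[2,0]" "[2,1]"] by (simp add: S2_iff C5_adj_def)
  have h6: "G [2,0] [2,4] \<in> {1..k}" using rng[of "[2,0]" "[2,4]"] by (simp add: S2_iff C5_adj_def)
  have h7: "G [2,1] [2,2] \<in> {1..k}" using rng[of "[2,1]" "[2,2]"] by (simp add: S2_iff C5_adj_def)
  have h8: "G [2,2] [2,3] \<in> {1..k}" using rng[of "[2,2]" "[2,3]"] by (simp add: S2_iff C5_adj_def)
  have h9: "G [2,3] [2,4] \<in> {1..k}" using rng[of "[2,3]" "[2,4]"] by (simp add: S2_iff C5_adj_def)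
  have h10: "G [2,3] [3,2] \<in> {1..k}" using rng[of "[2,3]" "[3,2]"] by (simp add: S2_iff C5_adj_def)
  have h11: "G [3,0] [3,1] \<in> {1..k}" using rng[of "[3,0]" "[3,1]"] by (simp add: S2_iff C5_adj_def)
  have h12: "G [3,0] [3,4] \<in> {1..k}" using rng[of "[3,0]" "[3,4]"] by (simp add: S2_iff C5_adj_def)
  have h13: "G [3,1] [3,2] \<in> {1..k}" using rng[of "[3,1]" "[3,2]"] by (simp add: S2_iff C5_adj_def)
  have h14: "G [3,2] [3,3] \<in> {1..k}" using rng[of "[3,2]" "[3,3]"] by (simp add: S2_iff C5_adj_def)
  have h15: "G [3,3] [3,4] \<in> {1..k}" using rng[of "[3,3]" "[3,4]"] by (simp add: S2_iff C5_adj_def)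
  have h16: "G [3,4] [4,3] \<in> {1..k}" using rng[of "[3,4]" "[4,3]"] by (simp add: S2_iff C5_adj_def)
  have h17: "G [4,0] [4,4] \<in> {1..k}" using rng[of "[4,0]" "[4,4]"] by (simp add: S2_iff C5_adj_def)
  have h18: "G [4,1] [4,2] \<in> {1..k}" using rng[of "[4,1]" "[4,2]"] by (simp add: S2_iff C5_adj_def)
  have h19: "G [4,2] [4,3] \<in> {1..k}" using rng[of "[4,2]" "[4,3]"] by (simp add: S2_iff C5_adj_def)
  have h20: "G [4,3] [4,4] \<in> {1..k}" using rng[of "[4,3]" "[4,4]"] by (simp add: S2_iff C5_adj_def)
  show False
    apply (rule comb3[of "G [1,0] [1,1]" "G [1,1] [1,2]" "G [1,2] [1,3]" "G [1,2] [2,1]" "G [1,3] [1,4]" "G [2,0] [2,1]" "G [2,0] [2,4]" "G [2,1] [2,2]" "G [2,2] [2,3]" "G [2,3] [2,4]" "G [2,3] [3,2]" "G [3,0] [3,1]" "G [3,0] [3,4]" "G [3,1] [3,2]" "G [3,2] [3,3]" "G [3,3] [3,4]" "G [3,4] [4,3]" "G [4,0] [4,4]" "G [4,1] [4,2]" "G [4,2] [4,3]" "G [4,3] [4,4]"])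
    using f0 f1 f2 f3 f4 f5 f6 f7 f8 f9 f10 f11 f12 f13 f14 f15 f16 f17 f18 f19 f20 f21 f22 f23 f24 f25 f26 f27 f28 f29 f30 f31 f32 f33 f34 f35 f36 f37 h0 h1 h2 h3 h4 h5 h6 h7 h8 h9 h10 h11 h12 h13 h14 h15 h16 h17 h18 h19 h20 k by auto
qed


definition col1 :: "nat \<Rightarrow> nat \<Rightarrow> nat" where
  "col1 a b = [2,1,3,2,1] ! ((a+b) mod 5)"

definition colS1 :: "nat list set \<Rightarrow> nat" where
  "colS1 e = (SOME k. \<exists>u v. e = {u,v} \<and> SS 1 u v \<and> k = col1 (hd u) (hd v))"

lemma colS1_eq:
  assumes s: "SS 1 u v" shows "colS1 {u,v} = col1 (hd u) (hd v)"
proof -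
  have "\<exists>k. \<exists>u' v'. {u,v} = {u',v'} \<and> SS 1 u' v' \<and> k = col1 (hd u') (hd v')"
    using s by blast
  from someI_ex[OF this] obtain u' v' where e: "{u,v} = {u',v'}"
    and k: "colS1 {u,v} = col1 (hd u') (hd v')" unfolding colS1_def by blast
  from e have "(u = u' \<and> v = v') \<or> (u = v' \<and> v = u')" by (simp add: doubleton_eq_iff)
  then show ?thesis using k unfolding col1_def by (metis add.commute)
qed

lemma col1_range: "col1 a b \<in> {1..3}"
proof -
  have "(a+b) mod 5 < 5" by simp
  then have "(a+b) mod 5 = 0 \<or> (a+b) mod 5 = 1 \<or> (a+b) mod 5 = 2 \<or> (a+b) mod 5 = 3 \<or> (a+b) mod 5 = 4"
    by arith
  then show ?thesis unfolding col1_def by auto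
qed

lemma S1_iff': "SS (Suc 0) [a] [c] \<longleftrightarrow> a<5 \<and> c<5 \<and> C5_adj a c"
  using S1_iff by simp

lemma SS1_shape: "SS 1 u v \<Longrightarrow> u = [hd u] \<and> hd u < 5"
  unfolding sierpinski_adj_def C5_vertices_def
  by (cases u) auto

lemma fincheck1: "\<forall>a\<in>set [0..<5]. \<forall>b\<in>set [0..<5]. \<forall>c\<in>set [0..<5]. \<forall>d\<in>set [0..<5].
   C5_adj a b \<and> C5_adj b c \<and> C5_adj c d \<and> a \<noteq> c \<and> d \<noteq> b \<longrightarrow> col1 a b \<noteq> col1 c d"
  by code_simp

lemma upper1: "injective_edge_coloring (SS 1) 3 colS1"
  unfolding injective_edge_coloring_def
proof (intro conjI ballI allI impI)
  fix e assume "e \<in> edges (SS 1)"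
  then obtain x y where "e = {x,y}" "SS 1 x y" unfolding edges_def by blast
  then show "colS1 e \<in> {1..3}" using colS1_eq col1_range by simp
next
  fix x y z u
  assume h: "SS 1 x y \<and> SS 1 y z \<and> SS 1 z u \<and> x \<noteq> y \<and> y \<noteq> z \<and> x \<noteq> z \<and> u \<noteq> y \<and> u \<noteq> z"
  then have xy: "SS 1 x y" and yz: "SS 1 y z" and zu: "SS 1 z u" and xz: "x \<noteq> z" and uy: "u \<noteq> y"
    by auto
  obtain a b c d where x: "x = [a]" and y: "y = [b]" and z: "z = [c]" and u: "u = [d]"
    and lt: "a < 5" "b < 5" "c < 5" "d < 5"
    using SS1_shape[OF xy] SS1_shape[OF yz] SS1_shape[OF zu] SS1_shape[OF SS_sym[OF zu]] by metis
  have adj: "C5_adj a b" "C5_adj b c" "C5_adj c d" using xy yz zu unfolding x y z u S1_iff by auto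
  have "col1 a b \<noteq> col1 c d" using fincheck1 lt adj xz uy unfolding x y z u by auto
  then show "colS1 {x, y} \<noteq> colS1 {z, u}" using colS1_eq xy zu unfolding x y z u by simp
qed

lemma lower1:
  assumes k: "k \<le> 2" and c: "injective_edge_coloring (SS 1) k c"
  shows False
proof -
  have c1: "\<forall>e\<in>edges (SS 1). c e \<in> {1..k}" and
    c2: "\<forall>x y z u. SS 1 x y \<and> SS 1 y z \<and> SS 1 z u \<and> x \<noteq> y \<and> y \<noteq> z \<and> x \<noteq> z
        \<and> u \<noteq> y \<and> u \<noteq> z \<longrightarrow> c {x, y} \<noteq> c {z, u}"
    using c unfolding injective_edge_coloring_def by blast+
  have rng: "c {x,y} \<in> {1..k}" if "SS 1 x y" for x y
    using c1 that unfolding edges_def by blast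
  have e1: "c {[0],[1]} \<noteq> c {[2],[3]}" using c2[rule_format, of "[0]" "[1]" "[2]" "[3]"] by (simp add: S1_iff S1_iff' C5_adj_def)
  have e2: "c {[1],[2]} \<noteq> c {[3],[4]}" using c2[rule_format, of "[1]" "[2]" "[3]" "[4]"] by (simp add: S1_iff S1_iff' C5_adj_def)
  have e3: "c {[2],[3]} \<noteq> c {[4],[0]}" using c2[rule_format, of "[2]" "[3]" "[4]" "[0]"] by (simp add: S1_iff S1_iff' C5_adj_def)
  have e4: "c {[3],[4]} \<noteq> c {[0],[1]}" using c2[rule_format, of "[3]" "[4]" "[0]" "[1]"] by (simp add: S1_iff S1_iff' C5_adj_def)
  have e5: "c {[4],[0]} \<noteq> c {[1],[2]}" using c2[rule_format, of "[4]" "[0]" "[1]" "[2]"] by (simp add: S1_iff S1_iff' C5_adj_def)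
  have r1: "c {[0],[1]} \<in> {1..k}" using rng[of "[0]" "[1]"] by (simp add: S1_iff S1_iff' C5_adj_def)
  have r2: "c {[1],[2]} \<in> {1..k}" using rng[of "[1]" "[2]"] by (simp add: S1_iff S1_iff' C5_adj_def)
  have r3: "c {[2],[3]} \<in> {1..k}" using rng[of "[2]" "[3]"] by (simp add: S1_iff S1_iff' C5_adj_def)
  have r4: "c {[3],[4]} \<in> {1..k}" using rng[of "[3]" "[4]"] by (simp add: S1_iff S1_iff' C5_adj_def)
  have r5: "c {[4],[0]} \<in> {1..k}" using rng[of "[4]" "[0]"] by (simp add: S1_iff S1_iff' C5_adj_def)
  show False using e1 e2 e3 e4 e5 r1 r2 r3 r4 r5 k by simp
qed

lemma index_eq:
  assumes ex: "\<exists>c. injective_edge_coloring adj k c"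
    and no: "\<And>m c. m < k \<Longrightarrow> \<not> injective_edge_coloring adj m c"
  shows "injective_chromatic_index adj = k"
  unfolding injective_chromatic_index_def
proof (rule Least_equality)
  show "\<exists>c. injective_edge_coloring adj k c" using ex .
next
  fix m assume "\<exists>c. injective_edge_coloring adj m c"
  then show "k \<le> m" using no not_le by blast
qed

theorem mainTheorem8:
  shows "injective_chromatic_index (sierpinski_adj C5_vertices C5_adj 1) = 3 \<and>
         (\<forall>n::nat. n \<ge> 2 \<longrightarrow>
            injective_chromatic_index (sierpinski_adj C5_vertices C5_adj n) = 4)"
proof (intro conjI allI impI)
  show "injective_chromatic_index (sierpinski_adj C5_vertices C5_adj 1) = 3"
  proof (rule index_eq)
    show "\<exists>c. injective_edge_coloring (SS 1) 3 c" using upper1 by blast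
    fix m c assume m: "m < (3::nat)"
    show "\<not> injective_edge_coloring (SS 1) m c"
    proof
      assume "injective_edge_coloring (SS 1) m c"
      moreover have "m \<le> 2" using m by simp
      ultimately show False using lower1 by blast
    qed
  qed
next
  fix n :: nat assume n: "n \<ge> 2"
  show "injective_chromatic_index (sierpinski_adj C5_vertices C5_adj n) = 4"
  proof (rule index_eq)
    show "\<exists>c. injective_edge_coloring (SS n) 4 c" using upper[OF n] by blast
    fix m c assume m: "m < (4::nat)"
    show "\<not> injective_edge_coloring (SS n) m c"
    proof
      assume "injective_edge_coloring (SS n) m c"
      moreover have "m \<le> 3" using m by simp
      ultimately show False using lower[OF n] by blast
    qed
  qed
qed

end
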